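(* With $\beta=\frac1k-\frac\theta{2k}$, the lattices $\varphi_\beta(\mathcal{O}_\mathbb{L})$ (rotated $\mathbb{Z}^k$) and $\varphi_\beta(L')$ (rotated $D_k$) have maximum diversity, and $d_{p,\min}(\varphi_\beta(\mathcal{O}_\mathbb{L}))=2^{(1-(m-1)k)/2}$, $d_{p,\min}(\varphi_\beta(L'))=2^{(3-(m-1)k)/2}$.
   Context: Let $m\ge3$, $k=2^{m-2}$, $\omega=e^{2\pi i/2^m}$, $\theta_j=\omega^j+\omega^{-j}$, $\theta=\theta_1$, $\mathbb{L}=\mathbb{Q}(\theta)$ (totally real, degree $k$, $\mathcal{O}_\mathbb{L}=\mathbb{Z}[\theta]$). Let $L'$ be the $\mathbb{Z}$-module generated by $2+\theta_1,\theta_1,\theta_2,\dots,\theta_{k-1}$. Let $\tau$ be a generator of $\mathrm{Gal}(\mathbb{L}/\mathbb{Q})$; for totally positive $\beta\in\mathbb{L}$, $\varphi_\beta(y)=(\sqrt{\tau^j(\beta)}\tau^j(y))_{j=0}^{k-1}$. A lattice has maximum diversity if each nonzero vector has all coordinates nonzero; then $d_{p,\min}(\Lambda)=\inf\{|y_1\cdots y_k|:0\ne y\in\Lambda\}$. *)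

theory Defs
  imports Complex_Main
begin

definition kdim :: "nat \<Rightarrow> nat" where
  "kdim m = 2 ^ (m - 2)"

definition omega :: "nat \<Rightarrow> complex" where
  "omega m = cis (2 * pi / 2 ^ m)"

definition theta :: "nat \<Rightarrow> nat \<Rightarrow> real" where
  "theta m j = Re (omega m ^ j + inverse (omega m) ^ j)"

text \<open>Generator tau of Gal(L/Q): tau(omega + omega^-1) = omega^3 + omega^-3, so
  tau^j(theta_i) = theta_(i * 3^j).  An element of O_L = Z[theta] is given by integer
  coefficients c_0..c_(k-1) of 1, theta, ..., theta^(k-1); its j-th conjugate is:\<close>

definition conj_OL :: "nat \<Rightarrow> (nat \<Rightarrow> int) \<Rightarrow> nat \<Rightarrow> real" where
  "conj_OL m c j = (\<Sum>i<kdim m. of_int (c i) * theta m (3 ^ j) ^ i)"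

text \<open>An element of L' = Z-span of 2+theta_1, theta_1, ..., theta_(k-1) with coefficients
  c_0 (for 2+theta_1) and c_i (for theta_i, 1 <= i < k); its j-th conjugate is:\<close>

definition conj_L' :: "nat \<Rightarrow> (nat \<Rightarrow> int) \<Rightarrow> nat \<Rightarrow> real" where
  "conj_L' m c j = of_int (c 0) * (2 + theta m (3 ^ j))
     + (\<Sum>i\<in>{1..<kdim m}. of_int (c i) * theta m (i * 3 ^ j))"

definition conj_beta :: "nat \<Rightarrow> nat \<Rightarrow> real" where
  "conj_beta m j = 1 / real (kdim m) - theta m (3 ^ j) / (2 * real (kdim m))"

definition coeffs :: "nat \<Rightarrow> (nat \<Rightarrow> int) set" where
  "coeffs m = {c. \<forall>i\<ge>kdim m. c i = 0}"

text \<open>phi_beta applied to an element given by its conjugates; vectors in R^k are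
  functions nat => real vanishing at indices >= k.\<close>

definition phi_beta :: "nat \<Rightarrow> (nat \<Rightarrow> real) \<Rightarrow> (nat \<Rightarrow> real)" where
  "phi_beta m conjs = (\<lambda>j. if j < kdim m then sqrt (conj_beta m j) * conjs j else 0)"

definition lattice_OL :: "nat \<Rightarrow> (nat \<Rightarrow> real) set" where
  "lattice_OL m = (\<lambda>c. phi_beta m (conj_OL m c)) ` coeffs m"

definition lattice_L' :: "nat \<Rightarrow> (nat \<Rightarrow> real) set" where
  "lattice_L' m = (\<lambda>c. phi_beta m (conj_L' m c)) ` coeffs m"

definition max_diversity :: "nat \<Rightarrow> (nat \<Rightarrow> real) set \<Rightarrow> bool" where
  "max_diversity n \<Lambda> \<longleftrightarrow> (\<forall>y\<in>\<Lambda>. y \<noteq> (\<lambda>_. 0) \<longrightarrow> (\<forall>j<n. y j \<noteq> 0))"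

definition dpmin :: "nat \<Rightarrow> (nat \<Rightarrow> real) set \<Rightarrow> real" where
  "dpmin n \<Lambda> = Inf {\<bar>\<Prod>j<n. y j\<bar> | y. y \<in> \<Lambda> \<and> y \<noteq> (\<lambda>_. 0)}"

end

theory Submission
  imports Defs "HOL-Computational_Algebra.Polynomial_Factorial"
begin

definition th :: "nat \<Rightarrow> nat \<Rightarrow> real" where
  "th n a = 2 * cos (2 * pi * real a / 2 ^ (n + 2))"

lemma theta_th: "theta (n + 2) a = th n a"
proof -
  have "omega (n+2) ^ a = cis (real a * (2 * pi / 2 ^ (n+2)))"
    unfolding omega_def by (simp add: DeMoivre)
  moreover have "inverse (omega (n+2)) ^ a = cis (- (real a * (2 * pi / 2 ^ (n+2))))"
    unfolding omega_def by (simp add: DeMoivre)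
  ultimately show ?thesis unfolding theta_def th_def by (simp add: algebra_simps)
qed

definition Th :: "nat \<Rightarrow> real set" where
  "Th n = th n ` {a. odd a}"

lemma th_sq: "(th (Suc n) a)^2 - 2 = th n a"
proof -
  define x where "x = 2 * pi * real a / 2 ^ (n + 3)"
  have "th (Suc n) a = 2 * cos x" unfolding th_def x_def by (simp add: numeral_3_eq_3)
  moreover have "th n a = 2 * cos (2 * x)" unfolding th_def x_def
    by (simp add: numeral_3_eq_3 field_simps)
  moreover have "cos (2*x) = 2 * (cos x)^2 - 1" by (rule cos_double_cos)
  ultimately show ?thesis by (simp add: power2_eq_square algebra_simps)
qed

lemma th_neg: "- th n a = th n (a + 2^(n+1))"
proof -
  have "2 * pi * real (a + 2^(n+1)) / 2 ^ (n + 2) = 2 * pi * real a / 2 ^ (n + 2) + pi"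
    by (simp add: field_simps power_add)
  then show ?thesis unfolding th_def by (simp add: cos_add)
qed

lemma th_bounds: "- 2 \<le> th n a" "th n a \<le> 2"
  unfolding th_def by auto

lemma th_ge: "0 \<le> th n a + 2" using th_bounds(1)[of n a] by linarith

lemma th_nz: assumes "odd a" shows "th (Suc n) a \<noteq> 0"
proof
  assume "th (Suc n) a = 0"
  then have "cos (2 * pi * real a / 2 ^ (n + 3)) = 0" unfolding th_def
    by (simp add: numeral_3_eq_3)
  then obtain i where i: "odd i" "2 * pi * real a / 2 ^ (n + 3) = of_int i * (pi/2)"
    using cos_zero_iff_int by blast
  then have "real a * 4 = of_int i * 2 ^ (n+3)"
    by (simp add: field_simps)
  then have "int a * 4 = i * 2 ^ (n+3)"
    by (metis (mono_tags, opaque_lifting) of_int_eq_iff of_int_mult of_int_numeral of_int_of_nat_eq of_int_power)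
  then have "int a = i * 2 ^ (n+1)" by (simp add: power_add)
  then have "even (int a)" by simp
  with assms show False by simp
qed

lemma th_odd_nat: "odd a \<Longrightarrow> odd (a + 2^(Suc n))" by simp

lemma Th_neg: "s \<in> Th n \<Longrightarrow> - s \<in> Th n"
  unfolding Th_def using th_neg by (auto intro!: image_eqI)

lemma Th0: "Th 0 = {0}"
proof -
  have "th 0 a = 0" if "odd a" for a
  proof -
    have "2 * pi * real a / 2 ^ 2 = of_int (int a) * (pi / 2)" by simp
    moreover have "odd (int a)" using that by simp
    ultimately have "cos (2 * pi * real a / 2 ^ 2) = 0"
      using cos_zero_iff_int by blast
    then show ?thesis unfolding th_def by simp
  qed
  then show ?thesis unfolding Th_def by (auto intro!: image_eqI[of _ _ 1])
qed

definition sr :: "real \<Rightarrow> real" where "sr r = sqrt (r + 2)"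

lemma Th_nz: "0 \<notin> Th (Suc n)"
  unfolding Th_def using th_nz by (metis (mono_tags) image_iff mem_Collect_eq)

lemma sr_in: assumes "r \<in> Th n" shows "sr r \<in> Th (Suc n)"
proof -
  obtain a where a: "odd a" "r = th n a" using assms unfolding Th_def by auto
  have "th n a + 2 = (th (Suc n) a)^2" using th_sq[of n a] by linarith
  then have "sr r = sqrt ((th (Suc n) a)^2)" unfolding sr_def a(2) by simp
  also have "\<dots> = \<bar>th (Suc n) a\<bar>" by simp
  finally have "sr r = th (Suc n) a \<or> sr r = - th (Suc n) a" by linarith
  moreover have "th (Suc n) a \<in> Th (Suc n)" using a unfolding Th_def by auto
  ultimately show ?thesis using Th_neg by auto
qed

lemma Th_sq: assumes "s \<in> Th (Suc n)" shows "s^2 - 2 \<in> Th n"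
  using assms th_sq unfolding Th_def by auto

lemma Th_Suc: "Th (Suc n) = sr ` Th n \<union> (\<lambda>r. - sr r) ` Th n"
proof
  show "sr ` Th n \<union> (\<lambda>r. - sr r) ` Th n \<subseteq> Th (Suc n)"
    using sr_in Th_neg by auto
  show "Th (Suc n) \<subseteq> sr ` Th n \<union> (\<lambda>r. - sr r) ` Th n"
  proof
    fix s assume s: "s \<in> Th (Suc n)"
    then have r: "s^2 - 2 \<in> Th n" by (rule Th_sq)
    have "sr (s^2 - 2) = \<bar>s\<bar>" unfolding sr_def by simp
    then have "s = sr (s^2-2) \<or> s = - sr (s^2 - 2)" by linarith
    then show "s \<in> sr ` Th n \<union> (\<lambda>r. - sr r) ` Th n" using r by blast
  qed
qed

lemma sr_inj: "inj sr"
  unfolding sr_def inj_def by simp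

lemma msr_inj: "inj (\<lambda>r. - sr r)"
  unfolding sr_def inj_def by simp

lemma Th_disj: "sr ` Th n \<inter> (\<lambda>r. - sr r) ` Th n = {}"
proof (rule ccontr)
  assume "sr ` Th n \<inter> (\<lambda>r. - sr r) ` Th n \<noteq> {}"
  then obtain r r' where rr: "r \<in> Th n" "r' \<in> Th n" "sr r = - sr r'" by auto
  have "sr r \<ge> 0" "sr r' \<ge> 0" using th_ge rr(1,2) unfolding sr_def Th_def by auto
  then have "sr r = 0" using rr(3) by linarith
  with sr_in[OF rr(1)] Th_nz show False by metis
qed

lemma Th_finite: "finite (Th n)"
  by (induction n) (auto simp: Th0 Th_Suc)

lemma Th_card: "card (Th n) = 2 ^ n"
proof (induction n)
  case 0 then show ?case by (simp add: Th0)
next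
  case (Suc n)
  have "card (Th (Suc n)) = card (sr ` Th n) + card ((\<lambda>r. - sr r) ` Th n)"
    unfolding Th_Suc by (rule card_Un_disjoint) (use Th_finite Th_disj in auto)
  also have "\<dots> = 2 ^ Suc n"
    using Suc card_image[OF inj_on_subset[OF sr_inj]] card_image[OF inj_on_subset[OF msr_inj]]
    by simp
  finally show ?case .
qed

lemma Th_prod_Suc:
  fixes f :: "real \<Rightarrow> 'a::comm_monoid_mult"
  shows "(\<Prod>s\<in>Th (Suc n). f s) = (\<Prod>r\<in>Th n. f (sr r) * f (- sr r))"
proof -
  have "(\<Prod>s\<in>Th (Suc n). f s) = (\<Prod>s\<in>sr ` Th n. f s) * (\<Prod>s\<in>(\<lambda>r. - sr r) ` Th n. f s)"
    unfolding Th_Suc by (rule prod.union_disjoint) (use Th_finite Th_disj in auto)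
  also have "\<dots> = (\<Prod>r\<in>Th n. f (sr r)) * (\<Prod>r\<in>Th n. f (- sr r))"
    by (simp add: prod.reindex[OF inj_on_subset[OF sr_inj]] prod.reindex[OF inj_on_subset[OF msr_inj]])
  finally show ?thesis by (simp add: prod.distrib)
qed

lemma sr_sq: "r \<in> Th n \<Longrightarrow> (sr r)^2 = r + 2"
  using th_ge unfolding sr_def Th_def by auto


definition ev :: "int poly \<Rightarrow> real \<Rightarrow> real" where
  "ev p x = poly (map_poly real_of_int p) x"

lemma mp_add: "map_poly real_of_int (p + q) = map_poly real_of_int p + map_poly real_of_int q"
  by (rule poly_eqI) (simp add: coeff_map_poly)

lemma mp_diff: "map_poly real_of_int (p - q) = map_poly real_of_int p - map_poly real_of_int q"
  by (rule poly_eqI) (simp add: coeff_map_poly)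

lemma mp_mult: "map_poly real_of_int (p * q) = map_poly real_of_int p * map_poly real_of_int q"
  by (rule poly_eqI) (simp add: coeff_map_poly coeff_mult)

lemma mp_smult: "map_poly real_of_int (smult c p) = smult (of_int c) (map_poly real_of_int p)"
  by (rule poly_eqI) (simp add: coeff_map_poly)

lemma mp_pCons: "map_poly real_of_int (pCons a p) = pCons (of_int a) (map_poly real_of_int p)"
  by (simp add: map_poly_pCons)

lemma ev_pCons[simp]: "ev (pCons a p) x = of_int a + x * ev p x"
  unfolding ev_def by (simp add: mp_pCons)

lemma ev_0[simp]: "ev 0 x = 0" unfolding ev_def by simp
lemma ev_1[simp]: "ev 1 x = 1" unfolding ev_def by simp
lemma ev_add[simp]: "ev (p + q) x = ev p x + ev q x" unfolding ev_def by (simp add: mp_add)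
lemma ev_diff[simp]: "ev (p - q) x = ev p x - ev q x" unfolding ev_def by (simp add: mp_diff)
lemma ev_mult[simp]: "ev (p * q) x = ev p x * ev q x" unfolding ev_def by (simp add: mp_mult)
lemma ev_smult[simp]: "ev (smult c p) x = of_int c * ev p x" unfolding ev_def by (simp add: mp_smult)
lemma ev_monom[simp]: "ev (monom c i) x = of_int c * x ^ i"
  unfolding ev_def by (simp add: map_poly_monom poly_monom)
lemma ev_power[simp]: "ev (p ^ i) x = ev p x ^ i" by (induction i) auto
lemma ev_sum: "ev (\<Sum>i\<in>A. f i) x = (\<Sum>i\<in>A. ev (f i) x)"
  by (induction A rule: infinite_finite_induct) auto

lemma ev_pcompose[simp]: "ev (pcompose p q) x = ev p (ev q x)"
  by (induction p) (auto simp: pcompose_pCons)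

lemma ev_0_coeff: "ev p 0 = of_int (coeff p 0)"
  unfolding ev_def by (simp add: poly_0_coeff_0 coeff_map_poly)

lemma ev_split: "\<exists>A B. \<forall>x. ev S x = ev A (x^2) + x * ev B (x^2)"
proof (induction S)
  case 0
  then show ?case by (intro exI[of _ 0]) auto
next
  case (pCons c S)
  then obtain A B where AB: "\<forall>x. ev S x = ev A (x^2) + x * ev B (x^2)" by blast
  show ?case
    by (intro exI[of _ "pCons c B"] exI[of _ A]) (auto simp: AB algebra_simps power2_eq_square)
qed

lemma ev_even: "\<exists>V. \<forall>x. ev S x * ev S (- x) = ev V (x^2)"
proof -
  obtain A B where AB: "\<forall>x. ev S x = ev A (x^2) + x * ev B (x^2)" using ev_split by blast
  show ?thesis
    by (intro exI[of _ "A * A - pCons 0 (B * B)"]) (auto simp: AB algebra_simps power2_eq_square)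
qed

definition Nm :: "nat \<Rightarrow> int poly \<Rightarrow> real" where
  "Nm n S = (\<Prod>r\<in>Th n. ev S r)"

lemma Nm_int: "Nm n S \<in> \<int>"
proof (induction n arbitrary: S)
  case 0
  then show ?case by (simp add: Nm_def Th0 ev_0_coeff)
next
  case (Suc n)
  obtain V where V: "\<forall>x. ev S x * ev S (- x) = ev V (x^2)" using ev_even by blast
  have "Nm (Suc n) S = (\<Prod>r\<in>Th n. ev S (sr r) * ev S (- sr r))"
    unfolding Nm_def by (rule Th_prod_Suc)
  also have "\<dots> = (\<Prod>r\<in>Th n. ev (pcompose V [:2,1:]) r)"
    by (rule prod.cong) (auto simp: V sr_sq add.commute)
  also have "\<dots> = Nm n (pcompose V [:2,1:])" unfolding Nm_def ..
  finally show ?case using Suc by simp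
qed

fun psi :: "nat \<Rightarrow> int poly" where
  "psi 0 = [:0,1:]"
| "psi (Suc n) = pcompose (psi n) [:-2,0,1:]"

lemma ev_psi: "ev (psi n) c = (\<Prod>r\<in>Th n. c - r)"
proof (induction n arbitrary: c)
  case 0
  then show ?case by (simp add: Th0)
next
  case (Suc n)
  have "ev (psi (Suc n)) c = ev (psi n) (c^2 - 2)" by (simp add: power2_eq_square)
  also have "\<dots> = (\<Prod>r\<in>Th n. c^2 - 2 - r)" by (rule Suc)
  also have "\<dots> = (\<Prod>r\<in>Th n. (c - sr r) * (c - - sr r))"
    by (rule prod.cong) (auto simp: sr_sq[unfolded power2_eq_square] algebra_simps power2_eq_square)
  also have "\<dots> = (\<Prod>s\<in>Th (Suc n). c - s)" by (rule Th_prod_Suc[symmetric])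
  finally show ?case .
qed

lemma psi_root: "r \<in> Th n \<Longrightarrow> ev (psi n) r = 0"
  unfolding ev_psi using Th_finite by (auto intro: prod_zero)

lemma poly_psi_2: "poly (psi n) 2 = 2"
  by (induction n) (auto simp: poly_pcompose)

lemma poly_psi_m2: "poly (psi n) (-2) = (if n = 0 then -2 else 2)"
  by (induction n) (auto simp: poly_pcompose poly_psi_2)

lemma coeff_psi_0: "n \<ge> 1 \<Longrightarrow> coeff (psi n) 0 = (if n = 1 then -2 else 2)"
  by (cases n) (auto simp: poly_0_coeff_0[symmetric] poly_pcompose poly_psi_m2)

lemma degree_psi: "degree (psi n) = 2 ^ n"
  by (induction n) (auto simp: degree_pcompose)

lemma lead_psi: "lead_coeff (psi n) = 1"
proof (induction n)
  case 0 then show ?case by simp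
next
  case (Suc n)
  have "lead_coeff (psi (Suc n)) = lead_coeff (psi n) * lead_coeff [:-2,0,1::int:] ^ degree (psi n)"
    unfolding psi.simps by (rule lead_coeff_comp) simp
  then show ?case using Suc by simp
qed

lemma pcompose_xpow: "pcompose ([:0,1:] ^ N) q = q ^ N"
  by (induction N) (auto simp: pcompose_mult pcompose_1 pcompose_pCons)

lemma pow_mod2: "\<exists>c. ((a::int poly) + smult 2 b) ^ N = a ^ N + smult 2 c"
proof (induction N)
  case 0 then show ?case by (intro exI[of _ 0]) auto
next
  case (Suc N)
  then obtain c where c: "(a + smult 2 b) ^ N = a ^ N + smult 2 c" by blast
  show ?case
    by (intro exI[of _ "a * c + b * a ^ N + smult 2 (b * c)"])
       (simp add: c algebra_simps smult_add_right)
qed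

lemma psi_mod2: "\<exists>E. psi n = [:0,1:] ^ (2 ^ n) + smult 2 E"
proof (induction n)
  case 0 then show ?case by (intro exI[of _ 0]) auto
next
  case (Suc n)
  then obtain E where E: "psi n = [:0,1:] ^ (2 ^ n) + smult 2 E" by blast
  have q: "[:-2,0,1::int:] = [:0,1:]^2 + smult 2 [:-1:]" by (simp add: power2_eq_square)
  obtain c where c: "([:0,1:]^2 + smult 2 [:-1:]) ^ (2^n) = ([:0,1::int:]^2) ^ (2^n) + smult 2 c"
    using pow_mod2 by blast
  have c': "[:-2,0,1::int:] ^ (2^n) = ([:0,1::int:]^2) ^ (2^n) + smult 2 c"
    by (subst q) (rule c)
  have "psi (Suc n) = [:-2,0,1:] ^ (2^n) + smult 2 (pcompose E [:-2,0,1:])"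
    by (simp add: E pcompose_add pcompose_smult pcompose_xpow)
  also have "\<dots> = [:0,1:] ^ (2 ^ Suc n) + smult 2 (c + pcompose E [:-2,0,1:])"
    by (simp only: c' power_mult[symmetric] smult_add_right add.assoc) (simp add: mult.commute)
  finally show ?case by blast
qed

lemma coeff_psi_even: "i < 2 ^ n \<Longrightarrow> even (coeff (psi n) i)"
proof -
  assume i: "i < 2 ^ n"
  obtain E where E: "psi n = [:0,1:] ^ (2 ^ n) + smult 2 E" using psi_mod2 by blast
  have "[:0,1::int:] ^ (2 ^ n) = monom 1 (2^n)" by (simp add: monom_altdef)
  then show ?thesis using i by (simp add: E)
qed


lemma eis_aux:
  assumes n: "n \<ge> 1" and qr: "psi n = q * r" and dq: "degree q \<ge> 1" and dr: "degree r \<ge> 1"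
    and r0: "odd (coeff r 0)"
  shows False
proof -
  have nz: "q \<noteq> 0" "r \<noteq> 0" using dq dr by auto
  have c0: "coeff q 0 * coeff r 0 = coeff (psi n) 0" unfolding qr by (simp add: coeff_mult)
  have "even (coeff (psi n) 0)" using coeff_psi_0[OF n] by auto
  then have q0: "even (coeff q 0)" using r0 c0 by (metis even_mult_iff)
  have "lead_coeff q * lead_coeff r = 1" using lead_psi[of n] qr by (simp add: lead_coeff_mult)
  then have "is_unit (lead_coeff q)" by (metis dvd_triv_left)
  then have lq: "odd (lead_coeff q)" by (meson dvd_trans odd_one)
  define s where "s = (LEAST i. odd (coeff q i))"
  have s1: "odd (coeff q s)" unfolding s_def by (rule LeastI[of _ "degree q"]) (rule lq)
  have s2: "\<And>i. i < s \<Longrightarrow> even (coeff q i)" unfolding s_def using not_less_Least by blast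
  have s3: "s \<le> degree q" unfolding s_def by (rule Least_le) (rule lq)
  have dpsi: "degree (psi n) = degree q + degree r" using qr nz by (simp add: degree_mult_eq)
  have "s < 2 ^ n" using s3 dr dpsi degree_psi[of n] by linarith
  then have ev1: "even (coeff (psi n) s)" by (rule coeff_psi_even)
  have "coeff (psi n) s = (\<Sum>i<s. coeff q i * coeff r (s - i)) + coeff q s * coeff r 0"
    unfolding qr coeff_mult by (simp add: lessThan_Suc_atMost[symmetric])
  moreover have "even (\<Sum>i<s. coeff q i * coeff r (s - i))"
    by (rule dvd_sum) (use s2 in auto)
  moreover have "odd (coeff q s * coeff r 0)" using s1 r0 by simp
  ultimately have "odd (coeff (psi n) s)" by simp
  with ev1 show False by simp
qed

lemma psi_irred: assumes n: "n \<ge> 1" shows "irreducible (psi n)"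
proof (rule irreducibleI)
  have dp: "degree (psi n) \<ge> 1" using degree_psi[of n] by simp
  then show "psi n \<noteq> 0" by auto
  show "\<not> is_unit (psi n)" using dp by (auto simp: is_unit_poly_iff)
  fix q r assume qr: "psi n = q * r"
  have lqr: "lead_coeff q * lead_coeff r = 1" using lead_psi[of n] qr by (simp add: lead_coeff_mult)
  show "is_unit q \<or> is_unit r"
  proof (cases "degree q = 0 \<or> degree r = 0")
    case True
    then show ?thesis
    proof
      assume "degree q = 0"
      then obtain c where "q = [:c:]" by (metis degree_eq_zeroE)
      moreover have "is_unit (lead_coeff q)" using lqr by (metis dvd_triv_left)
      ultimately show ?thesis by (auto simp: is_unit_poly_iff)
    next
      assume "degree r = 0"
      then obtain c where "r = [:c:]" by (metis degree_eq_zeroE)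
      moreover have "is_unit (lead_coeff r)" using lqr by (metis dvd_triv_right)
      ultimately show ?thesis by (auto simp: is_unit_poly_iff)
    qed
  next
    case False
    then have d: "degree q \<ge> 1" "degree r \<ge> 1" by auto
    have c0: "coeff q 0 * coeff r 0 = coeff (psi n) 0" unfolding qr by (simp add: coeff_mult)
    show ?thesis
    proof (cases "odd (coeff r 0)")
      case True
      from eis_aux[OF n qr d True] show ?thesis ..
    next
      case False
      have "\<not> 4 dvd coeff (psi n) 0" using coeff_psi_0[OF n] by auto
      then have "odd (coeff q 0)" using False c0
        by (metis dvd_mult_div_cancel even_mult_iff mult_dvd_mono numeral_Bit0_eq_double mult_2)
      moreover have "psi n = r * q" using qr by (simp add: mult.commute)
      ultimately have False using eis_aux[OF n _ d(2) d(1)] by blast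
      then show ?thesis ..
    qed
  qed
qed

lemma psi_prime: "n \<ge> 1 \<Longrightarrow> prime_elem (psi n)"
  by (rule irreducible_imp_prime_poly) (rule psi_irred)

lemma nonvanish:
  assumes n: "n \<ge> 1" and r: "r \<in> Th n"
  shows "S \<noteq> 0 \<Longrightarrow> degree S < 2 ^ n \<Longrightarrow> ev S r \<noteq> 0"
proof (induction "degree S" arbitrary: S rule: less_induct)
  case less
  show ?case
  proof
    assume S0: "ev S r = 0"
    show False
    proof (cases "degree S = 0")
      case True
      then obtain c where c: "S = [:c:]" by (metis degree_eq_zeroE)
      then have "c \<noteq> 0" using less.prems by auto
      then show False using S0 c by simp
    next
      case False
      obtain q rm where qr: "pseudo_divmod (psi n) S = (q, rm)" by (cases "pseudo_divmod (psi n) S") auto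
      define c where "c = coeff S (degree S) ^ (Suc (degree (psi n)) - degree S)"
      have eq: "smult c (psi n) = S * q + rm" and rmd: "rm = 0 \<or> degree rm < degree S"
        using pseudo_divmod[OF less.prems(1) qr] unfolding c_def by auto
      have "of_int c * ev (psi n) r = ev S r * ev q r + ev rm r"
        using arg_cong[OF eq, of "\<lambda>p. ev p r"] by simp
      then have rm0: "ev rm r = 0" using psi_root[OF r] S0 by simp
      have "rm = 0"
      proof (rule ccontr)
        assume "rm \<noteq> 0"
        then have "degree rm < degree S" using rmd by auto
        moreover have "degree rm < 2 ^ n" using calculation less.prems by linarith
        ultimately show False using less.hyps[of rm] \<open>rm \<noteq> 0\<close> rm0 by blast
      qed
      have cnz: "c \<noteq> 0" unfolding c_def using less.prems(1) by simp
      have eq': "smult c (psi n) = S * q" using eq \<open>rm = 0\<close> by simp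
      have pnz: "psi n \<noteq> 0" using degree_psi[of n] n by auto
      have qnz: "q \<noteq> 0" using eq' cnz pnz by auto
      have "psi n dvd S * q" using eq'[symmetric] by (metis dvd_smult dvd_refl)
      then have "psi n dvd S \<or> psi n dvd q" using psi_prime[OF n] by (simp add: prime_elem_dvd_mult_iff)
      moreover have "degree (psi n) = degree S + degree q"
        using arg_cong[OF eq', of degree] cnz less.prems(1) qnz by (simp add: degree_mult_eq)
      ultimately show False
        using dvd_imp_degree_le[of "psi n" S] dvd_imp_degree_le[of "psi n" q] less.prems qnz False
        by (auto simp: degree_psi)
    qed
  qed
qed


lemma key3: "e \<ge> 1 \<Longrightarrow> \<exists>u. odd u \<and> (3::int)^(2^e) = 1 + 2^(e+2)*u"
proof (induction e rule: dec_induct)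
  case base then show ?case by (intro exI[of _ 1]) simp
next
  case (step e)
  then obtain u where u: "odd u" "(3::int)^(2^e) = 1 + 2^(e+2)*u" by blast
  have "(3::int)^(2^Suc e) = ((3::int)^(2^e))^2" by (simp add: power_mult[symmetric] mult.commute)
  also have "\<dots> = 1 + 2^(Suc e+2) * (u + 2^(e+1)*u^2)"
    by (simp add: u power2_eq_square algebra_simps power_add)
  finally show ?case using u(1) by (intro exI[of _ "u + 2^(e+1)*u^2"]) simp
qed

lemma binom_mod:
  fixes X M :: int
  assumes "M dvd X^2"
  shows "M dvd (1+X)^t - 1 - of_nat t * X"
proof (induction t)
  case 0 then show ?case by simp
next
  case (Suc t)
  have "(1+X)^Suc t - 1 - of_nat (Suc t) * X
      = (1+X) * ((1+X)^t - 1 - of_nat t * X) + of_nat t * X^2"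
    by (simp add: algebra_simps power2_eq_square)
  then show ?case using Suc assms by (simp add: dvd_add dvd_mult)
qed

lemma pow3_mod8: "(3::int)^d mod 8 = 1 \<or> (3::int)^d mod 8 = 3"
proof (induction d)
  case 0 then show ?case by simp
next
  case (Suc d)
  have "(3::int)^Suc d mod 8 = (3 * ((3::int)^d mod 8)) mod 8" by (simp add: mod_mult_right_eq)
  with Suc show ?case by auto
qed

lemma pow3_mod8': "(3::int)^d mod 8 = (if even d then 1 else 3)"
proof (induction d)
  case 0 then show ?case by simp
next
  case (Suc d)
  have "(3::int)^Suc d mod 8 = (3 * ((3::int)^d mod 8)) mod 8" by (simp add: mod_mult_right_eq)
  with Suc show ?case by auto
qed

lemma ord3: "(2::int)^(n+2) dvd 3^d - 1 \<Longrightarrow> 2^n dvd d"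
proof (induction n arbitrary: d)
  case 0 then show ?case by simp
next
  case (Suc n)
  have "(2::int)^(n+2) dvd 2^(Suc n + 2)" by (simp add: le_imp_power_dvd)
  then have "(2::int)^(n+2) dvd 3^d - 1" using Suc.prems dvd_trans by blast
  then obtain t where t: "d = 2^n * t" using Suc.IH by blast
  show ?case
  proof (rule ccontr)
    assume "\<not> 2 ^ Suc n dvd d"
    then have todd: "odd t" using t by auto
    show False
    proof (cases "n = 0")
      case True
      then have "odd d" using t todd by simp
      then have m3: "(3::int)^d mod 8 = 3" using pow3_mod8'[of d] by simp
      have "(8::int) dvd 3^d - 1" using Suc.prems True by simp
      then obtain q where "(3::int)^d - 1 = 8 * q" by (rule dvdE)
      then have "(3::int)^d = 8 * q + 1" by simp
      then show False using m3 by simp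
    next
      case False
      then obtain u where u: "odd u" "(3::int)^(2^n) = 1 + 2^(n+2)*u" using key3[of n] by auto
      define X where "X = (2::int)^(n+2)*u"
      have p1: "(2::int)^(n+2) * 2^(n+2) = 2^(n+3) * 2^(n+1)"
      proof -
        have e: "n+2+(n+2) = n+3+(n+1)" by simp
        show ?thesis by (simp only: power_add[symmetric] e)
      qed
      have "X^2 = (2::int)^(n+2) * 2^(n+2) * u^2" unfolding X_def power2_eq_square by (simp only: ac_simps)
      then have "X^2 = (2::int)^(n+3) * (2^(n+1) * u^2)" unfolding p1 by (simp only: ac_simps)
      then have "(2::int)^(n+3) dvd X^2" by simp
      then have A: "(2::int)^(n+3) dvd (1+X)^t - 1 - of_nat t * X" by (rule binom_mod)
      have B0: "((3::int)^(2^n))^t = (1+X)^t" unfolding X_def u(2) by (rule refl)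
      have B: "(1+X)^t = (3::int)^d" by (simp only: t power_mult B0)
      have e3: "Suc n + 2 = n + 3" by simp
      have C: "(2::int)^(n+3) dvd 3^d - 1" using Suc.prems by (simp only: e3)
      have D: "of_nat t * X = (3^d - 1) - ((1+X)^t - 1 - of_nat t * X)" unfolding B by (simp only: diff_diff_eq2 diff_diff_cancel)
      have F0: "(2::int)^(n+3) dvd (3^d - 1) - ((1+X)^t - 1 - of_nat t * X)" using C A by (rule dvd_diff)
      have F: "(2::int)^(n+3) dvd of_nat t * X" by (subst D) (rule F0)
      have e4: "(2::int)^(n+3) = 2^(n+2) * 2" by (simp add: power_add)
      have e5: "of_nat t * X = 2^(n+2) * (of_nat t * u)" unfolding X_def by (simp only: ac_simps)
      have "(2::int)^(n+2) * 2 dvd (2::int)^(n+2) * (of_nat t * u)" using F unfolding e4 e5 .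
      then have "2 dvd of_nat t * u" by (subst (asm) dvd_mult_cancel_left) simp
      then show False using todd u(1) by simp
    qed
  qed
qed

lemma th_eq_cases:
  assumes "th n a = th n b"
  shows "(2::int)^(n+2) dvd int a + int b \<or> (2::int)^(n+2) dvd int b - int a"
proof -
  define N :: real where "N = 2^(n+2)"
  have N: "N > 0" unfolding N_def by simp
  define x where "x = 2 * pi * real a / N"
  define y where "y = 2 * pi * real b / N"
  have "cos x = cos y" using assms unfolding th_def x_def y_def N_def by simp
  then have "2 * sin ((x + y) / 2) * sin ((y - x) / 2) = 0" using cos_diff_cos[of x y] by simp
  then have "sin ((x + y) / 2) = 0 \<or> sin ((y - x) / 2) = 0" by simp
  then show ?thesis
  proof
    assume "sin ((x + y) / 2) = 0"
    then obtain z :: int where "(x+y)/2 = of_int z * pi" using sin_zero_iff_int2 by blast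
    then have "(real a + real b) * (2*pi) = (of_int z * N) * (2*pi)" unfolding x_def y_def using N
      by (simp add: field_simps)
    then have "real a + real b = of_int z * N" by simp
    then have "real_of_int (int a + int b) = real_of_int (z * 2^(n+2))" unfolding N_def by simp
    then have "int a + int b = z * 2^(n+2)" by (rule of_int_eq_iff[THEN iffD1])
    then show ?thesis by simp
  next
    assume "sin ((y - x) / 2) = 0"
    then obtain z :: int where "(y-x)/2 = of_int z * pi" using sin_zero_iff_int2 by blast
    then have "(real b - real a) * (2*pi) = (of_int z * N) * (2*pi)" unfolding x_def y_def using N
      by (simp add: field_simps)
    then have "real b - real a = of_int z * N" by simp
    then have "real_of_int (int b - int a) = real_of_int (z * 2^(n+2))" unfolding N_def by simp
    then have "int b - int a = z * 2^(n+2)" by (rule of_int_eq_iff[THEN iffD1])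
    then show ?thesis by simp
  qed
qed

lemma inj_aux:
  assumes n: "n \<ge> 1" and ij: "i < j" "j < 2^n" and eq: "th n (3^i) = th n (3^j)"
  shows False
proof -
  define d where "d = j - i"
  have d: "0 < d" "d < 2^n" "j = i + d" using ij unfolding d_def by auto
  have c23: "coprime (2::int) 3"
  proof (rule coprimeI)
    fix c :: int assume "c dvd 2" "c dvd 3"
    then have "c dvd 3 - 2" by (rule dvd_diff[rotated])
    then show "is_unit c" by simp
  qed
  have cop: "coprime ((2::int)^(n+2)) (3^i)" using c23 by (simp only: coprime_power_left_iff coprime_power_right_iff) simp
  have e1: "int (3^i) + int (3^j) = 3^i * (3^d + 1)" using d(3) by (simp add: power_add algebra_simps)
  have e2: "int (3^j) - int (3^i) = 3^i * (3^d - 1)" using d(3) by (simp add: power_add algebra_simps)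
  from th_eq_cases[OF eq]
  have "(2::int)^(n+2) dvd 3^i * (3^d + 1) \<or> (2::int)^(n+2) dvd 3^i * (3^d - 1)"
    unfolding e1 e2 .
  then have "(2::int)^(n+2) dvd 3^d + 1 \<or> (2::int)^(n+2) dvd 3^d - 1"
    using coprime_dvd_mult_right_iff[OF cop] by blast
  then show False
  proof
    assume h: "(2::int)^(n+2) dvd 3^d + 1"
    have "(8::int) dvd 2^(n+2)" using n le_imp_power_dvd[of 3 "n+2" "2::int"] by simp
    then have "(8::int) dvd 3^d + 1" using h dvd_trans by blast
    then have "((3::int)^d + 1) mod 8 = 0" by simp
    moreover have "((3::int)^d + 1) mod 8 = ((3^d mod 8) + 1) mod 8" by (simp add: mod_add_left_eq)
    ultimately show False using pow3_mod8[of d] by auto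
  next
    assume "(2::int)^(n+2) dvd 3^d - 1"
    then have "2^n dvd d" by (rule ord3)
    then show False using d by (auto dest: dvd_imp_le)
  qed
qed

lemma th3_inj: "n \<ge> 1 \<Longrightarrow> inj_on (\<lambda>j. th n (3^j)) {..<2^n}"
proof (rule inj_onI)
  fix i j assume n: "n \<ge> 1" and ij: "i \<in> {..<2^n}" "j \<in> {..<2^n}" and eq: "th n (3^i) = th n (3^j)"
  show "i = j"
  proof (rule linorder_cases[of i j])
    assume "i < j" then show ?thesis using inj_aux[OF n _ _ eq] ij by auto
  next
    assume "j < i" then show ?thesis using inj_aux[OF n _ _ eq[symmetric]] ij by auto
  qed
qed

lemma th3_bij: assumes n: "n \<ge> 1" shows "bij_betw (\<lambda>j. th n (3^j)) {..<2^n} (Th n)"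
proof -
  have sub: "(\<lambda>j. th n (3^j)) ` {..<2^n} \<subseteq> Th n" unfolding Th_def by auto
  have "card ((\<lambda>j. th n (3^j)) ` {..<2^n}) = 2^n" using card_image[OF th3_inj[OF n]] by simp
  then have "(\<lambda>j. th n (3^j)) ` {..<2^n} = Th n"
    using card_subset_eq[OF Th_finite sub] Th_card by simp
  then show ?thesis using th3_inj[OF n] unfolding bij_betw_def by simp
qed

lemma prod_Th: "n \<ge> 1 \<Longrightarrow> (\<Prod>r\<in>Th n. f r) = (\<Prod>j<2^n. f (th n (3^j)))"
  using prod.reindex_bij_betw[OF th3_bij, of n f] by simp


fun D :: "nat \<Rightarrow> int poly" where
  "D 0 = [:2:]"
| "D (Suc 0) = [:0,1:]"
| "D (Suc (Suc i)) = [:0,1:] * D (Suc i) - D i"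

lemma ev_D: "ev (D i) (2 * cos x) = 2 * cos (real i * x)"
proof (induction i rule: D.induct)
  case 1 then show ?case by simp
next
  case 2 then show ?case by simp
next
  case (3 i)
  have "cos (real (Suc (Suc i)) * x) + cos (real i * x) = 2 * cos x * cos (real (Suc i) * x)"
  proof -
    have "real (Suc (Suc i)) * x = real (Suc i) * x + x" "real i * x = real (Suc i) * x - x"
      by (simp_all add: algebra_simps)
    then show ?thesis by (simp add: cos_add cos_diff)
  qed
  then show ?case using 3 by (simp add: algebra_simps)
qed

lemma th_mult: "th n (i * a) = ev (D i) (th n a)"
proof -
  have "th n (i * a) = 2 * cos (real i * (2 * pi * real a / 2 ^ (n + 2)))"
    unfolding th_def by (simp add: algebra_simps)
  then show ?thesis unfolding th_def ev_D by simp
qed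

lemma D_deg: "degree (D i) \<le> i \<and> coeff (D i) i = (if i = 0 then 2 else 1)"
proof (induction i rule: D.induct)
  case 1 then show ?case by simp
next
  case 2 then show ?case by simp
next
  case (3 i)
  have d1: "degree ([:0,1:] * D (Suc i)) \<le> Suc (Suc i)"
    using 3(1) by (metis degree_mult_le degree_pCons_eq_if add_Suc add_0 degree_0 le_trans
        add_le_mono nat.distinct(1) one_neq_zero order_refl  plus_1_eq_Suc pCons_eq_0_iff)
  have d2: "degree (D i) \<le> Suc (Suc i)" using 3(2) by simp
  have "degree (D (Suc (Suc i))) \<le> Suc (Suc i)"
    unfolding D.simps by (rule order_trans[OF degree_diff_le_max]) (use d1 d2 in simp)
  moreover have "coeff (D (Suc (Suc i))) (Suc (Suc i)) = 1"
    using 3 by (auto simp: coeff_pCons coeff_eq_0)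
  ultimately show ?case by simp
qed

lemma D_coeff_hi: "i < t \<Longrightarrow> coeff (D i) t = 0"
  using D_deg[of i] by (simp add: coeff_eq_0)

lemma D_coeff_0: "even (coeff (D i) 0)"
  by (induction i rule: D.induct) auto

definition Pc :: "nat \<Rightarrow> (nat \<Rightarrow> int) \<Rightarrow> int poly" where
  "Pc K c = (\<Sum>i<K. monom (c i) i)"

definition Rc :: "nat \<Rightarrow> (nat \<Rightarrow> int) \<Rightarrow> int poly" where
  "Rc K c = smult (c 0) [:2,1:] + (\<Sum>i\<in>{1..<K}. smult (c i) (D i))"

lemma kdim_n: "kdim (n+2) = 2^n" unfolding kdim_def by simp

lemma conj_OL_ev: "conj_OL (n+2) c j = ev (Pc (2^n) c) (th n (3^j))"
  unfolding conj_OL_def Pc_def kdim_n theta_th by (simp add: ev_sum)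

lemma conj_L'_ev: "conj_L' (n+2) c j = ev (Rc (2^n) c) (th n (3^j))"
  unfolding conj_L'_def Rc_def kdim_n theta_th by (simp add: ev_sum th_mult algebra_simps)

lemma coeff_Pc: "coeff (Pc K c) t = (if t < K then c t else 0)"
  unfolding Pc_def by (simp add: coeff_sum)

lemma Pc_deg: "K \<ge> 1 \<Longrightarrow> degree (Pc K c) < K"
proof -
  assume K: "K \<ge> 1"
  have "degree (Pc K c) \<le> K - 1" by (rule degree_le) (auto simp: coeff_Pc)
  then show ?thesis using K by linarith
qed

lemma coeff_Rc: "coeff (Rc K c) t = c 0 * coeff [:2,1:] t + (\<Sum>i\<in>{1..<K}. c i * coeff (D i) t)"
  unfolding Rc_def coeff_add coeff_smult coeff_sum by (rule refl)

lemma Rc_deg: "K \<ge> 2 \<Longrightarrow> degree (Rc K c) < K"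
proof -
  assume K: "K \<ge> 2"
  have "degree (Rc K c) \<le> K - 1"
  proof (rule degree_le, intro allI impI)
    fix t assume t: "K - 1 < t"
    have "coeff [:2,1::int:] t = 0" using t K by (simp add: coeff_pCons split: nat.splits)
    moreover have "(\<Sum>i\<in>{1..<K}. c i * coeff (D i) t) = 0"
      by (rule sum.neutral) (use t in \<open>auto simp: D_coeff_hi\<close>)
    ultimately show "coeff (Rc K c) t = 0" by (simp add: coeff_Rc)
  qed
  then show ?thesis using K by linarith
qed

lemma Rc_coeff0_even: "even (coeff (Rc K c) 0)"
  unfolding coeff_Rc by (auto intro!: dvd_sum simp: D_coeff_0)

lemma Pc_nz: assumes "\<forall>i\<ge>K. c i = 0" "c \<noteq> (\<lambda>_. 0)" shows "Pc K c \<noteq> 0"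
proof
  assume "Pc K c = 0"
  then have "\<forall>t. c t = 0" using assms(1) arg_cong[of _ _ "\<lambda>p. coeff p t" for t]
    by (metis coeff_0 coeff_Pc not_le)
  with assms(2) show False by auto
qed

lemma Rc_nz: assumes K: "K \<ge> 2" and c: "\<forall>i\<ge>K. c i = 0" "c \<noteq> (\<lambda>_. 0)" shows "Rc K c \<noteq> 0"
proof
  assume R0: "Rc K c = 0"
  have hi: "c t = 0" if "2 \<le> t" "t < K" for t
  proof (rule ccontr)
    assume ct: "c t \<noteq> 0"
    define S where "S = {i. 2 \<le> i \<and> i < K \<and> c i \<noteq> 0}"
    have fS: "finite S" unfolding S_def by auto
    have tS: "t \<in> S" unfolding S_def using that ct by auto
    define u where "u = Max S"
    have uS: "u \<in> S" unfolding u_def using fS tS Max_in by blast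
    have above: "c i = 0" if "u < i" "i < K" for i
    proof (rule ccontr)
      assume "c i \<noteq> 0"
      then have "i \<in> S" unfolding S_def using that uS S_def by auto
      then have "i \<le> u" unfolding u_def using fS by simp
      with that show False by simp
    qed
    have "coeff (Rc K c) u = c u"
    proof -
      have "coeff [:2,1::int:] u = 0" using uS unfolding S_def by (simp add: coeff_pCons split: nat.splits)
      moreover have "(\<Sum>i\<in>{1..<K}. c i * coeff (D i) u) = (\<Sum>i\<in>{1..<K}. if i = u then c u else 0)"
      proof (rule sum.cong)
        fix i assume i: "i \<in> {1..<K}"
        show "c i * coeff (D i) u = (if i = u then c u else 0)"
        proof (cases "i < u")
          case True then show ?thesis by (simp add: D_coeff_hi)
        next
          case False
          then show ?thesis using above[of i] i D_deg[of u] uS unfolding S_def by auto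
        qed
      qed simp
      moreover have "u \<in> {1..<K}" using uS unfolding S_def by auto
      ultimately show ?thesis by (simp add: coeff_Rc)
    qed
    then have "c u = 0" using R0 by simp
    then show False using uS unfolding S_def by auto
  qed
  have "Rc K c = smult (c 0) [:2,1:] + smult (c 1) (D 1)"
  proof -
    have "(\<Sum>i\<in>{1..<K}. smult (c i) (D i)) = (\<Sum>i\<in>{1}. smult (c i) (D i))"
      by (rule sum.mono_neutral_right) (use K hi in auto)
    then show ?thesis unfolding Rc_def by simp
  qed
  then have "[:2 * c 0, c 0 + c 1:] = 0" using R0 by (simp add: algebra_simps)
  then have "c 0 = 0" "c 1 = 0" by auto
  then have "\<forall>t. c t = 0"
  proof (intro allI)
    fix t
    show "c t = 0"
    proof (cases "t < 2")
      case True then have "t = 0 \<or> t = 1" by auto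
      then show ?thesis using \<open>c 0 = 0\<close> \<open>c 1 = 0\<close> by auto
    next
      case False then show ?thesis using hi c(1) by (cases "t < K") auto
    qed
  qed
  with c(2) show False by auto
qed


lemma ev_of_int: "ev p (of_int z) = of_int (poly p z)"
  by (induction p) auto

lemma Th_member: "th n (3^j) \<in> Th n"
  unfolding Th_def by auto

lemma Nm_nz: assumes n: "n \<ge> 1" and S: "S \<noteq> 0" "degree S < 2^n" shows "Nm n S \<noteq> 0"
  unfolding Nm_def using Th_finite nonvanish[OF n _ S] by auto

lemma Ints_abs_ge1: "x \<in> \<int> \<Longrightarrow> x \<noteq> 0 \<Longrightarrow> \<bar>x\<bar> \<ge> (1::real)"
proof -
  assume "x \<in> \<int>" "x \<noteq> 0"
  then obtain z where z: "x = of_int z" "z \<noteq> 0" by (auto elim!: Ints_cases)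
  then have "\<bar>z\<bar> \<ge> 1" by linarith
  then have "real_of_int \<bar>z\<bar> \<ge> 1" by linarith
  then show ?thesis using z by simp
qed

lemma Nm_ge1: assumes n: "n \<ge> 1" and S: "S \<noteq> 0" "degree S < 2^n" shows "\<bar>Nm n S\<bar> \<ge> 1"
  using Ints_abs_ge1[OF Nm_int Nm_nz[OF n S]] .

lemma prod_Th_abs: assumes n: "n \<ge> 1" shows "\<bar>\<Prod>r\<in>Th n. r\<bar> = 2"
proof -
  have "ev (psi n) 0 = (\<Prod>r\<in>Th n. (-1) * r)" unfolding ev_psi by (rule prod.cong) auto
  also have "\<dots> = (\<Prod>r\<in>Th n. -1) * (\<Prod>r\<in>Th n. r)" by (rule prod.distrib)
  also have "(\<Prod>r\<in>Th n. (-1::real)) = (-1) ^ card (Th n)" by simp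
  finally have "\<bar>ev (psi n) 0\<bar> = \<bar>\<Prod>r\<in>Th n. r\<bar>" by (simp add: abs_mult)
  moreover have "\<bar>ev (psi n) 0\<bar> = 2" using coeff_psi_0[OF n] by (simp add: ev_0_coeff)
  ultimately show ?thesis by simp
qed

lemma Nm_L: assumes n: "n \<ge> 1" and R: "R \<noteq> 0" "degree R < 2^n" and ev0: "even (coeff R 0)"
  shows "\<bar>Nm n R\<bar> \<ge> 2"
proof -
  obtain a R1 where aR: "R = pCons a R1" by (cases R) auto
  obtain p0 Q1 where pQ: "psi n = pCons p0 Q1" by (cases "psi n") auto
  have p0: "p0 = (if n = 1 then -2 else 2)" using coeff_psi_0[OF n] pQ by simp
  define e :: int where "e = (if n = 1 then -1 else 1)"
  have ep: "e * p0 = 2" unfolding e_def p0 by simp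
  obtain b where b: "a = 2 * b" using ev0 aR by auto
  define S where "S = R1 - smult (b * e) Q1"
  have fact: "ev R r = r * ev S r" if r: "r \<in> Th n" for r
  proof -
    have "0 = of_int p0 + r * ev Q1 r" using psi_root[OF r] pQ by simp
    then have "of_int p0 = - r * ev Q1 r" by linarith
    moreover have "of_int a = of_int b * of_int e * (of_int p0 :: real)"
      using b ep by (metis mult.assoc mult.commute of_int_mult of_int_numeral)
    ultimately have "of_int a = - of_int b * of_int e * r * (ev Q1 r)" by simp
    then show ?thesis unfolding aR S_def by (simp add: algebra_simps)
  qed
  have "Nm n R = (\<Prod>r\<in>Th n. r * ev S r)" unfolding Nm_def by (rule prod.cong) (auto simp: fact)
  also have "\<dots> = (\<Prod>r\<in>Th n. r) * Nm n S" unfolding Nm_def by (rule prod.distrib)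
  finally have NR: "Nm n R = (\<Prod>r\<in>Th n. r) * Nm n S" .
  have "Nm n S \<noteq> 0" using NR Nm_nz[OF n R] by auto
  then have "\<bar>Nm n S\<bar> \<ge> 1" by (rule Ints_abs_ge1[OF Nm_int])
  then show ?thesis using NR prod_Th_abs[OF n] by (simp add: abs_mult)
qed

lemma sqrt_prod: "finite A \<Longrightarrow> (\<Prod>j\<in>A. sqrt (f j)) = sqrt (\<Prod>j\<in>A. f j)"
  by (induction A rule: finite_induct) (auto simp: real_sqrt_mult)

lemma beta_eq: "conj_beta (n+2) j = (2 - th n (3^j)) / (2 * 2^n)"
  unfolding conj_beta_def kdim_n theta_th by (simp add: field_simps)

lemma th_lt2: "th n (3^j) < 2"
proof -
  have "ev (psi n) 2 = 2" using ev_of_int[of "psi n" 2] poly_psi_2[of n] by simp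
  moreover have "ev (psi n) (th n (3^j)) = 0" by (rule psi_root[OF Th_member])
  ultimately have "th n (3^j) \<noteq> 2" by auto
  then show ?thesis using th_bounds(2)[of n "3^j"] by linarith
qed

lemma beta_pos: "conj_beta (n+2) j > 0"
  unfolding beta_eq using th_lt2[of n j] by (simp add: field_simps)

lemma beta_prod: assumes n: "n \<ge> 1"
  shows "(\<Prod>j<2^n. conj_beta (n+2) j) = 2 / 2 ^ ((n+1) * 2^n)"
proof -
  have "(\<Prod>j<2^n. conj_beta (n+2) j) = (\<Prod>j<2^n. 2 - th n (3^j)) / (\<Prod>j<(2::nat)^n. 2 * 2^n)"
    unfolding beta_eq by (rule prod_dividef)
  also have "(\<Prod>j<2^n. 2 - th n (3^j)) = (\<Prod>r\<in>Th n. 2 - r)" by (rule prod_Th[OF n, symmetric])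
  also have "\<dots> = 2" using ev_psi[of n 2] ev_of_int[of "psi n" 2] poly_psi_2[of n] by simp
  also have "(\<Prod>j<(2::nat)^n. 2 * 2^n) = ((2::real) * 2^n) ^ (2^n)" by simp
  also have "(2::real) * 2^n = 2 ^ (n+1)" by simp
  also have "((2::real) ^ (n+1)) ^ (2^n) = 2 ^ ((n+1) * 2^n)" by (simp only: power_mult)
  finally show ?thesis .
qed

definition sb :: "nat \<Rightarrow> real" where "sb n = sqrt (2 / 2 ^ ((n+1) * 2^n))"

lemma sb_pos: "sb n > 0" unfolding sb_def by simp

lemma sb_powr: "sb n = 2 powr ((1 - (real (n+2) - 1) * real (kdim (n+2))) / 2)"
proof -
  have "2 / 2 ^ ((n+1) * 2^n) = (2::real) powr (1 - (real (n+2) - 1) * real (kdim (n+2)))"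
    unfolding kdim_n by (simp add: powr_diff powr_realpow[symmetric] algebra_simps)
  then show ?thesis unfolding sb_def by (simp add: powr_half_sqrt_powr)
qed

lemma sb_powr3: "2 * sb n = 2 powr ((3 - (real (n+2) - 1) * real (kdim (n+2))) / 2)"
proof -
  have "(3 - (real (n+2) - 1) * real (kdim (n+2))) / 2 = 1 + (1 - (real (n+2) - 1) * real (kdim (n+2))) / 2"
    by (simp add: field_simps)
  then show ?thesis unfolding sb_powr by (simp only:) (simp add: powr_add)
qed

lemma prod_phi: assumes n: "n \<ge> 1"
  shows "(\<Prod>j<2^n. phi_beta (n+2) g j) = sb n * (\<Prod>j<2^n. g j)"
proof -
  have "(\<Prod>j<2^n. phi_beta (n+2) g j) = (\<Prod>j<2^n. sqrt (conj_beta (n+2) j) * g j)"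
    unfolding phi_beta_def kdim_n by (rule prod.cong) auto
  also have "\<dots> = (\<Prod>j<2^n. sqrt (conj_beta (n+2) j)) * (\<Prod>j<2^n. g j)" by (rule prod.distrib)
  also have "(\<Prod>j<2^n. sqrt (conj_beta (n+2) j)) = sb n"
    unfolding sqrt_prod[OF finite_lessThan] beta_prod[OF n] sb_def ..
  finally show ?thesis .
qed

lemma phi_nz: "j < 2^n \<Longrightarrow> g j \<noteq> 0 \<Longrightarrow> phi_beta (n+2) g j \<noteq> 0"
  unfolding phi_beta_def kdim_n using beta_pos[of n j] by simp


lemma lat_generic:
  fixes g :: "(nat \<Rightarrow> int) \<Rightarrow> nat \<Rightarrow> real" and L :: real
  assumes n: "n \<ge> 1"
    and g0: "\<And>j. g (\<lambda>_. 0) j = 0"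
    and gnz: "\<And>c j. c \<in> Defs.coeffs (n+2) \<Longrightarrow> c \<noteq> (\<lambda>_. 0) \<Longrightarrow> j < 2^n \<Longrightarrow> g c j \<noteq> 0"
    and gL: "\<And>c. c \<in> Defs.coeffs (n+2) \<Longrightarrow> c \<noteq> (\<lambda>_. 0) \<Longrightarrow> \<bar>\<Prod>j<2^n. g c j\<bar> \<ge> L"
    and w: "c0 \<in> Defs.coeffs (n+2)" "c0 \<noteq> (\<lambda>_. 0)" "\<bar>\<Prod>j<2^n. g c0 j\<bar> = L"
  shows "max_diversity (kdim (n+2)) ((\<lambda>c. phi_beta (n+2) (g c)) ` Defs.coeffs (n+2))"
    and "dpmin (kdim (n+2)) ((\<lambda>c. phi_beta (n+2) (g c)) ` Defs.coeffs (n+2)) = sb n * L"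
proof -
  have cnz: "c \<noteq> (\<lambda>_. 0)" if "phi_beta (n+2) (g c) \<noteq> (\<lambda>_. 0)" for c
  proof
    assume "c = (\<lambda>_. 0)"
    then have "phi_beta (n+2) (g c) = (\<lambda>_. 0)" unfolding phi_beta_def by (auto simp: g0)
    with that show False by simp
  qed
  show "max_diversity (kdim (n+2)) ((\<lambda>c. phi_beta (n+2) (g c)) ` Defs.coeffs (n+2))"
    unfolding max_diversity_def kdim_n using cnz gnz phi_nz by blast
  define X where "X = {\<bar>\<Prod>j<2^n. y j\<bar> | y. y \<in> (\<lambda>c. phi_beta (n+2) (g c)) ` Defs.coeffs (n+2) \<and> y \<noteq> (\<lambda>_. 0)}"
  have "Inf X = sb n * L"
  proof (rule cInf_eq_minimum)
    have "phi_beta (n+2) (g c0) 0 \<noteq> 0" using phi_nz[of 0 n "g c0"] gnz[OF w(1,2), of 0] by simp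
    then have "phi_beta (n+2) (g c0) \<noteq> (\<lambda>_. 0)" by (metis)
    moreover have "\<bar>\<Prod>j<2^n. phi_beta (n+2) (g c0) j\<bar> = sb n * L"
      unfolding prod_phi[OF n] using w(3) sb_pos[of n] by (simp add: abs_mult)
    moreover have "phi_beta (n+2) (g c0) \<in> (\<lambda>c. phi_beta (n+2) (g c)) ` Defs.coeffs (n+2)"
      using w(1) by (rule imageI)
    ultimately show "sb n * L \<in> X" unfolding X_def
      by (intro CollectI exI[of _ "phi_beta (n+2) (g c0)"] conjI) auto
  next
    fix x assume "x \<in> X"
    then obtain c where c: "c \<in> Defs.coeffs (n+2)" "phi_beta (n+2) (g c) \<noteq> (\<lambda>_. 0)"
      and x: "x = \<bar>\<Prod>j<2^n. phi_beta (n+2) (g c) j\<bar>" unfolding X_def by blast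
    have "x = sb n * \<bar>\<Prod>j<2^n. g c j\<bar>" unfolding x prod_phi[OF n] using sb_pos[of n] by (simp add: abs_mult)
    moreover have "\<bar>\<Prod>j<2^n. g c j\<bar> \<ge> L" using gL[OF c(1) cnz[OF c(2)]] .
    ultimately show "sb n * L \<le> x" using sb_pos[of n] by simp
  qed
  then show "dpmin (kdim (n+2)) ((\<lambda>c. phi_beta (n+2) (g c)) ` Defs.coeffs (n+2)) = sb n * L"
    unfolding dpmin_def kdim_n X_def .
qed

lemma coeffs_n: "c \<in> Defs.coeffs (n+2) \<longleftrightarrow> (\<forall>i\<ge>2^n. c i = 0)"
  unfolding Defs.coeffs_def kdim_n by simp

lemma coeffs_n2: "c \<in> Defs.coeffs (Suc (Suc n)) \<longleftrightarrow> (\<forall>i\<ge>2^n. c i = 0)"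
  using coeffs_n[of c n] by simp

lemma OL_facts: assumes n: "n \<ge> 1"
  shows "max_diversity (kdim (n+2)) (lattice_OL (n+2))"
    and "dpmin (kdim (n+2)) (lattice_OL (n+2)) = sb n * 1"
proof -
  define c1 :: "nat \<Rightarrow> int" where "c1 = (\<lambda>i. if i = 0 then 1 else 0)"
  have c1: "c1 \<in> Defs.coeffs (n+2)" "c1 \<noteq> (\<lambda>_. 0)" unfolding coeffs_n c1_def by (auto dest: fun_cong[of _ _ 0])
  have conj1: "conj_OL (n+2) c1 j = 1" for j
  proof -
    have "conj_OL (n+2) c1 j = (\<Sum>i<(2::nat)^n. if i = 0 then 1 else (0::real))"
      unfolding conj_OL_def kdim_n c1_def by (rule sum.cong) auto
    then show ?thesis by simp
  qed
  have K: "2^n \<ge> (1::nat)" by simp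
  note gen = lat_generic[of n "conj_OL (n+2)" 1 c1, OF n]
  have g0: "conj_OL (n+2) (\<lambda>_. 0) j = 0" for j unfolding conj_OL_def by simp
  have gnz: "conj_OL (n+2) c j \<noteq> 0" if "c \<in> Defs.coeffs (n+2)" "c \<noteq> (\<lambda>_. 0)" "j < 2^n" for c j
    unfolding conj_OL_ev
    by (rule nonvanish[OF n Th_member Pc_nz Pc_deg[OF K]]) (use that in \<open>auto simp: coeffs_n coeffs_n2\<close>)
  have gL: "\<bar>\<Prod>j<2^n. conj_OL (n+2) c j\<bar> \<ge> 1" if "c \<in> Defs.coeffs (n+2)" "c \<noteq> (\<lambda>_. 0)" for c
  proof -
    have "(\<Prod>j<2^n. conj_OL (n+2) c j) = Nm n (Pc (2^n) c)"
      unfolding conj_OL_ev Nm_def by (rule prod_Th[OF n, symmetric])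
    moreover have "\<bar>Nm n (Pc (2^n) c)\<bar> \<ge> 1"
      by (rule Nm_ge1[OF n Pc_nz Pc_deg[OF K]]) (use that in \<open>auto simp: coeffs_n coeffs_n2\<close>)
    ultimately show ?thesis by simp
  qed
  have w3: "\<bar>\<Prod>j<2^n. conj_OL (n+2) c1 j\<bar> = 1" unfolding conj1 by simp
  show "max_diversity (kdim (n+2)) (lattice_OL (n+2))"
    unfolding lattice_OL_def by (rule gen(1)[OF g0 gnz gL c1 w3])
  show "dpmin (kdim (n+2)) (lattice_OL (n+2)) = sb n * 1"
    unfolding lattice_OL_def by (rule gen(2)[OF g0 gnz gL c1 w3])
qed

lemma L'_facts: assumes n: "n \<ge> 1"
  shows "max_diversity (kdim (n+2)) (lattice_L' (n+2))"
    and "dpmin (kdim (n+2)) (lattice_L' (n+2)) = sb n * 2"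
proof -
  have K: "2^n \<ge> (2::nat)" using n by (metis one_le_power power_one_right power_increasing_iff
      le_refl numeral_le_iff semiring_norm(69) one_less_numeral_iff power_increasing one_le_numeral)
  define c1 :: "nat \<Rightarrow> int" where "c1 = (\<lambda>i. if i = 1 then 1 else 0)"
  have c1: "c1 \<in> Defs.coeffs (n+2)" "c1 \<noteq> (\<lambda>_. 0)" unfolding coeffs_n c1_def
    using K by (auto dest: fun_cong[of _ _ 1])
  have conj1: "conj_L' (n+2) c1 j = th n (3^j)" for j
  proof -
    have s: "(\<Sum>i\<in>{1..<(2::nat)^n}. real_of_int (c1 i) * th n (i * 3^j))
        = (\<Sum>i\<in>{1..<(2::nat)^n}. if i = 1 then th n (3^j) else 0)"
      by (rule sum.cong) (auto simp: c1_def)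
    have "conj_L' (n+2) c1 j = (\<Sum>i\<in>{1..<(2::nat)^n}. if i = 1 then th n (3^j) else 0)"
      unfolding conj_L'_def kdim_n theta_th s[symmetric] by (simp add: c1_def)
    then show ?thesis using K by simp
  qed
  note gen = lat_generic[of n "conj_L' (n+2)" 2 c1, OF n]
  have g0: "conj_L' (n+2) (\<lambda>_. 0) j = 0" for j unfolding conj_L'_def by simp
  have gnz: "conj_L' (n+2) c j \<noteq> 0" if "c \<in> Defs.coeffs (n+2)" "c \<noteq> (\<lambda>_. 0)" "j < 2^n" for c j
    unfolding conj_L'_ev
    by (rule nonvanish[OF n Th_member Rc_nz[OF K] Rc_deg[OF K]]) (use that in \<open>auto simp: coeffs_n coeffs_n2\<close>)
  have gL: "\<bar>\<Prod>j<2^n. conj_L' (n+2) c j\<bar> \<ge> 2" if "c \<in> Defs.coeffs (n+2)" "c \<noteq> (\<lambda>_. 0)" for c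
  proof -
    have "(\<Prod>j<2^n. conj_L' (n+2) c j) = Nm n (Rc (2^n) c)"
      unfolding conj_L'_ev Nm_def by (rule prod_Th[OF n, symmetric])
    moreover have "\<bar>Nm n (Rc (2^n) c)\<bar> \<ge> 2"
      by (rule Nm_L[OF n Rc_nz[OF K] Rc_deg[OF K] Rc_coeff0_even]) (use that in \<open>auto simp: coeffs_n coeffs_n2\<close>)
    ultimately show ?thesis by simp
  qed
  have w3: "\<bar>\<Prod>j<2^n. conj_L' (n+2) c1 j\<bar> = 2"
  proof -
    have "(\<Prod>j<2^n. th n (3^j)) = (\<Prod>r\<in>Th n. r)" using prod_Th[OF n, of "\<lambda>r. r"] by simp
    then show ?thesis unfolding conj1 using prod_Th_abs[OF n] by simp
  qed
  show "max_diversity (kdim (n+2)) (lattice_L' (n+2))"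
    unfolding lattice_L'_def by (rule gen(1)[OF g0 gnz gL c1 w3])
  show "dpmin (kdim (n+2)) (lattice_L' (n+2)) = sb n * 2"
    unfolding lattice_L'_def by (rule gen(2)[OF g0 gnz gL c1 w3])
qed

theorem mainTheorem12:
  fixes m :: nat
  assumes "m \<ge> 3"
  shows "max_diversity (kdim m) (lattice_OL m)
       \<and> max_diversity (kdim m) (lattice_L' m)
       \<and> dpmin (kdim m) (lattice_OL m) = 2 powr ((1 - (real m - 1) * real (kdim m)) / 2)
       \<and> dpmin (kdim m) (lattice_L' m) = 2 powr ((3 - (real m - 1) * real (kdim m)) / 2)"
proof -
  define n where "n = m - 2"
  have n: "n \<ge> 1" "m = n + 2" using assms unfolding n_def by auto
  show ?thesis unfolding n(2)
    using OL_facts[OF n(1)] L'_facts[OF n(1)] sb_powr[of n] sb_powr3[of n]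
    by (simp add: mult.commute)
qed

end
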